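(* Let $\mathbb X,\mathbb Y$ be Euclidean spaces, $g\colon\mathbb X\to\mathbb Y$ twice continuously differentiable, $D\subset\mathbb Y$ closed, $\Phi(x):=g(x)-D$, $(\bar x,0)\in\operatorname{gph}\Phi$, $u\in\mathbb S_{\mathbb X}$. Assume FOSCMS$(u)$: for all $y^*$, [$\nabla g(\bar x)^*y^*=0$, $y^*\in\mathcal N_D(g(\bar x);\nabla g(\bar x)u)$] implies $y^*=0$. Then all of the following hold: (Q1) for all $y^*,z^*$: [$\nabla g(\bar x)^*y^*=0$, $\nabla^2\langle y^*,g\rangle(\bar x)(u)+\nabla g(\bar x)^*z^*=0$, $y^*\in\mathcal N_D(g(\bar x);\nabla g(\bar x)u)$, $z^*\in D\mathcal N_D(g(\bar x),y^* )(\nabla g(\bar x)u)$] implies $y^*=0$; either (Q2): for all $y^*,\hat z^*$: [$\nabla g(\bar x)^*y^*=0$, $\nabla g(\bar x)^*\hat z^*=0$, $y^*\in\mathcal N_D(g(\bar x);\nabla g(\bar x)u)$, $\hat z^*\in D\mathcal N_D(g(\bar x),y^* )(0)$] implies $\hat z^*=0$, or (Q3): $\nabla g(\bar x)u\ne0$ and for all $y^*,\hat z^*$: [$\nabla g(\bar x)^*y^*=0$, $\nabla g(\bar x)^*\hat z^*=0$, $y^*\in\mathcal N_D(g(\bar x);\nabla g(\bar x)u)$] implies $\hat z^*\notin D_{\mathrm{sub}}\mathcal N_D(g(\bar x),y^* )(\nabla g(\bar x)u/\|\nabla g(\bar x)u\|)$; and for each $x^*\in\mathbb X$ and $y^*,z^*\in\mathbb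 Y$ with $x^*=\nabla^2\langle y^*,g\rangle(\bar x)(u)+\nabla g(\bar x)^*z^*$, $y^*\in\mathcal N_D(g(\bar x);\nabla g(\bar x)u)\cap\ker\nabla g(\bar x)^*$, $z^*\in D\mathcal N_D(g(\bar x),y^* )(\nabla g(\bar x)u)$, there is $\lambda\in\mathcal N_D(g(\bar x))$ with $x^*=\nabla g(\bar x)^*\lambda$.
   Context: $\nabla^2\langle y^*,g\rangle(\bar x)(u)$ is the Hessian of $x\mapsto\langle y^*,g(x)\rangle$ applied to $u$. $\mathcal N_D$ is the limiting normal cone; $\mathcal N_D(y;w)$ the directional limiting normal cone (all $\eta$ with $w_k\to w$, $t_k\downarrow0$, $\eta_k\to\eta$, $\eta_k\in\widehat{\mathcal N}_D(y+t_kw_k)$, $\widehat{\mathcal N}$ regular normal cone). $D\mathcal N_D(\bar y,\bar y^* )$ is the graphical derivative of the normal cone mapping (graph $=\mathcal T_{\operatorname{gph}\mathcal N_D}(\bar y,\bar y^* )$); $D_{\mathrm{sub}}\mathcal N_D(\bar y,\bar y^* )(w)$, $w\in\mathbb S_{\mathbb Y}$, is the set of $q\in\mathbb S_{\mathbb Y}$ with $w_k\to w$, $q_k\to q$, $t_k,\tau_k\downarrow0$, $\tau_k/t_k\to\infty$ and $\bar y^*+\tau_kq_k\in\mathcal N_D(\bar y+t_kw_k)$. *)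

theory Defs
  imports "HOL-Analysis.Analysis"
begin

definition regular_normal_cone :: "'a::euclidean_space set \<Rightarrow> 'a \<Rightarrow> 'a set" where
  "regular_normal_cone D y = {\<eta>. y \<in> D \<and>
     (\<forall>\<epsilon>>0. \<exists>\<delta>>0. \<forall>y'\<in>D. norm (y' - y) < \<delta> \<longrightarrow> \<eta> \<bullet> (y' - y) \<le> \<epsilon> * norm (y' - y))}"

definition limiting_normal_cone :: "'a::euclidean_space set \<Rightarrow> 'a \<Rightarrow> 'a set" where
  "limiting_normal_cone D y = {\<eta>. \<exists>yk \<eta>k. yk \<longlonglongrightarrow> y \<and> \<eta>k \<longlonglongrightarrow> \<eta> \<and>
     (\<forall>k. yk k \<in> D \<and> \<eta>k k \<in> regular_normal_cone D (yk k))}"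

definition dir_normal_cone :: "'a::euclidean_space set \<Rightarrow> 'a \<Rightarrow> 'a \<Rightarrow> 'a set" where
  "dir_normal_cone D y w = {\<eta>. \<exists>wk tk \<eta>k. wk \<longlonglongrightarrow> w \<and> tk \<longlonglongrightarrow> 0 \<and> (\<forall>k. tk k > 0) \<and>
     \<eta>k \<longlonglongrightarrow> \<eta> \<and> (\<forall>k. \<eta>k k \<in> regular_normal_cone D (y + tk k *\<^sub>R wk k))}"

text \<open>Graphical derivative of the normal cone mapping: graph equals the
  tangent (contingent) cone of gph N_D at (ybar, ystar).\<close>
definition graph_deriv_normal_cone :: "'a::euclidean_space set \<Rightarrow> 'a \<Rightarrow> 'a \<Rightarrow> 'a \<Rightarrow> 'a set" where
  "graph_deriv_normal_cone D ybar ystar w = {z. \<exists>tk wk zk. tk \<longlonglongrightarrow> 0 \<and> (\<forall>k. tk k > 0) \<and>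
     wk \<longlonglongrightarrow> w \<and> zk \<longlonglongrightarrow> z \<and>
     (\<forall>k. ystar + tk k *\<^sub>R zk k \<in> limiting_normal_cone D (ybar + tk k *\<^sub>R wk k))}"

definition sub_deriv_normal_cone :: "'a::euclidean_space set \<Rightarrow> 'a \<Rightarrow> 'a \<Rightarrow> 'a \<Rightarrow> 'a set" where
  "sub_deriv_normal_cone D ybar ystar w = {q. norm q = 1 \<and> (\<exists>wk qk tk \<tau>k.
     wk \<longlonglongrightarrow> w \<and> qk \<longlonglongrightarrow> q \<and> tk \<longlonglongrightarrow> 0 \<and> \<tau>k \<longlonglongrightarrow> 0 \<and>
     (\<forall>k. tk k > 0 \<and> \<tau>k k > 0) \<and> filterlim (\<lambda>k. \<tau>k k / tk k) at_top sequentially \<and>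
     (\<forall>k. ystar + \<tau>k k *\<^sub>R qk k \<in> limiting_normal_cone D (ybar + tk k *\<^sub>R wk k)))}"

text \<open>Hessian of x \<mapsto> <ystar, g x> at a point applied to u, given the second
  derivative G2x (a bilinear map) of g at that point: the vector h with
  h \<bullet> v = ystar \<bullet> G2x u v for all v.\<close>
definition hess_apply :: "('a::euclidean_space \<Rightarrow>\<^sub>L 'a \<Rightarrow>\<^sub>L 'b::euclidean_space) \<Rightarrow> 'b \<Rightarrow> 'a \<Rightarrow> 'a" where
  "hess_apply G2x ystar u = (\<Sum>b\<in>Basis. (ystar \<bullet> blinfun_apply (blinfun_apply G2x u) b) *\<^sub>R b)"

end

theory Submission
  imports Defs
begin

lemma reg_cone:
  assumes "e \<in> regular_normal_cone D y" "(c::real) > 0"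
  shows "c *\<^sub>R e \<in> regular_normal_cone D y"
proof -
  have yD: "y \<in> D" using assms(1) unfolding regular_normal_cone_def by auto
  show ?thesis unfolding regular_normal_cone_def
  proof (safe intro!: yD)
    fix \<epsilon> :: real assume "\<epsilon> > 0"
    then have "\<epsilon> / c > 0" using assms(2) by simp
    then obtain \<delta> where d: "\<delta> > 0" "\<forall>y'\<in>D. norm (y' - y) < \<delta> \<longrightarrow> e \<bullet> (y' - y) \<le> (\<epsilon>/c) * norm (y' - y)"
      using assms(1) unfolding regular_normal_cone_def by blast
    show "\<exists>\<delta>>0. \<forall>y'\<in>D. norm (y' - y) < \<delta> \<longrightarrow> c *\<^sub>R e \<bullet> (y' - y) \<le> \<epsilon> * norm (y' - y)"
    proof (intro exI[of _ \<delta>] conjI ballI impI)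
      fix y' assume "y' \<in> D" "norm (y' - y) < \<delta>"
      then have "e \<bullet> (y' - y) \<le> (\<epsilon>/c) * norm (y' - y)" using d by blast
      then have "c * (e \<bullet> (y' - y)) \<le> c * ((\<epsilon>/c) * norm (y' - y))"
        using assms(2) by (intro mult_left_mono) auto
      also have "\<dots> = \<epsilon> * norm (y' - y)" using assms(2) by simp
      finally show "c *\<^sub>R e \<bullet> (y' - y) \<le> \<epsilon> * norm (y' - y)" by simp
    qed (use d in auto)
  qed
qed

lemma lim_cone:
  assumes "e \<in> limiting_normal_cone D y" "(c::real) > 0"
  shows "c *\<^sub>R e \<in> limiting_normal_cone D y"
proof -
  obtain yk ek where h: "yk \<longlonglongrightarrow> y" "ek \<longlonglongrightarrow> e" "\<forall>k. yk k \<in> D \<and> ek k \<in> regular_normal_cone D (yk k)"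
    using assms(1) unfolding limiting_normal_cone_def by blast
  show ?thesis unfolding limiting_normal_cone_def
    apply (rule CollectI, rule exI[of _ yk], rule exI[of _ "\<lambda>k. c *\<^sub>R ek k"])
    using h reg_cone[OF _ assms(2)] by (auto intro: tendsto_scaleR)
qed

lemma approx:
  assumes "e \<in> limiting_normal_cone D y" "(\<delta>::real) > 0"
  shows "\<exists>y' e'. y' \<in> D \<and> e' \<in> regular_normal_cone D y' \<and> norm (y' - y) < \<delta> \<and> norm (e' - e) < \<delta>"
proof -
  obtain yk ek where h: "yk \<longlonglongrightarrow> y" "ek \<longlonglongrightarrow> e" "\<forall>k. yk k \<in> D \<and> ek k \<in> regular_normal_cone D (yk k)"
    using assms(1) unfolding limiting_normal_cone_def by blast
  obtain n1 where n1: "\<forall>n\<ge>n1. norm (yk n - y) < \<delta>" using h(1) assms(2) unfolding LIMSEQ_iff by blast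
  obtain n2 where n2: "\<forall>n\<ge>n2. norm (ek n - e) < \<delta>" using h(2) assms(2) unfolding LIMSEQ_iff by blast
  show ?thesis using n1[rule_format, of "max n1 n2"] n2[rule_format, of "max n1 n2"] h(3) by auto
qed

lemma dir_lemma:
  assumes t: "\<forall>k. tk k > (0::real)" "tk \<longlonglongrightarrow> 0" and w: "wk \<longlonglongrightarrow> w" and e: "ek \<longlonglongrightarrow> e"
    and mem: "\<forall>k. ek k \<in> limiting_normal_cone D (ybar + tk k *\<^sub>R wk k)"
  shows "e \<in> dir_normal_cone D ybar w"
proof -
  have "\<forall>k. \<exists>y' e'. y' \<in> D \<and> e' \<in> regular_normal_cone D y' \<and>
      norm (y' - (ybar + tk k *\<^sub>R wk k)) < tk k * inverse (real (Suc k)) \<and> norm (e' - ek k) < inverse (real (Suc k))"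
  proof
    fix k
    have p: "tk k * inverse (real (Suc k)) > 0" using t by simp
    from approx[OF mem[rule_format, of k] p] obtain y' e' where
      a: "y' \<in> D" "e' \<in> regular_normal_cone D y'" "norm (y' - (ybar + tk k *\<^sub>R wk k)) < tk k * inverse (real (Suc k))"
         "norm (e' - ek k) < tk k * inverse (real (Suc k))" by blast
    obtain y'' e'' where b: "y'' \<in> D" "e'' \<in> regular_normal_cone D y''" "norm (y'' - (ybar + tk k *\<^sub>R wk k)) < min (tk k * inverse (real (Suc k))) (inverse (real (Suc k)))"
         "norm (e'' - ek k) < min (tk k * inverse (real (Suc k))) (inverse (real (Suc k)))"
      using approx[OF mem[rule_format, of k], of "min (tk k * inverse (real (Suc k))) (inverse (real (Suc k)))"] p by auto
    then show "\<exists>y' e'. y' \<in> D \<and> e' \<in> regular_normal_cone D y' \<and>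
      norm (y' - (ybar + tk k *\<^sub>R wk k)) < tk k * inverse (real (Suc k)) \<and> norm (e' - ek k) < inverse (real (Suc k))"
      by auto
  qed
  then obtain Y E where YE: "\<forall>k. Y k \<in> D \<and> E k \<in> regular_normal_cone D (Y k) \<and>
      norm (Y k - (ybar + tk k *\<^sub>R wk k)) < tk k * inverse (real (Suc k)) \<and> norm (E k - ek k) < inverse (real (Suc k))"
    by metis
  define W where "W k = inverse (tk k) *\<^sub>R (Y k - ybar)" for k
  have YW: "ybar + tk k *\<^sub>R W k = Y k" for k using t(1)[rule_format, of k] by (simp add: W_def)
  have nW: "norm (W k - wk k) \<le> inverse (real (Suc k))" for k
  proof -
    have "W k - wk k = inverse (tk k) *\<^sub>R (Y k - (ybar + tk k *\<^sub>R wk k))"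
      using t(1)[rule_format, of k] by (simp add: W_def algebra_simps)
    then have "norm (W k - wk k) = inverse (tk k) * norm (Y k - (ybar + tk k *\<^sub>R wk k))"
      using t(1)[rule_format, of k] by simp
    also have "\<dots> \<le> inverse (tk k) * (tk k * inverse (real (Suc k)))"
      using YE t(1) by (intro mult_left_mono) (auto simp: less_imp_le)
    also have "\<dots> = inverse (real (Suc k))" using t(1)[rule_format, of k] by simp
    finally show ?thesis .
  qed
  have L1: "(\<lambda>k. W k - wk k) \<longlonglongrightarrow> 0"
    by (rule Lim_null_comparison[OF _ LIMSEQ_inverse_real_of_nat]) (use nW in auto)
  have WW: "W \<longlonglongrightarrow> w" using tendsto_add[OF w L1] by simp
  have L2: "(\<lambda>k. E k - ek k) \<longlonglongrightarrow> 0"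
    by (rule Lim_null_comparison[OF _ LIMSEQ_inverse_real_of_nat]) (use YE in \<open>auto simp: less_imp_le\<close>)
  have EE: "E \<longlonglongrightarrow> e" using tendsto_add[OF e L2] by simp
  show ?thesis unfolding dir_normal_cone_def
    apply (rule CollectI, rule exI[of _ W], rule exI[of _ tk], rule exI[of _ E])
    using WW EE t YE YW by auto
qed

lemma dir_sub_lim:
  assumes "e \<in> dir_normal_cone D ybar w" shows "e \<in> limiting_normal_cone D ybar"
proof -
  obtain wk tk ek where h: "wk \<longlonglongrightarrow> w" "tk \<longlonglongrightarrow> 0" "\<forall>k. tk k > 0" "ek \<longlonglongrightarrow> e"
     "\<forall>k. ek k \<in> regular_normal_cone D (ybar + tk k *\<^sub>R wk k)"
    using assms unfolding dir_normal_cone_def by blast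
  have "(\<lambda>k. ybar + tk k *\<^sub>R wk k) \<longlonglongrightarrow> ybar + 0 *\<^sub>R w"
    by (intro tendsto_intros h)
  then have c: "(\<lambda>k. ybar + tk k *\<^sub>R wk k) \<longlonglongrightarrow> ybar" by simp
  show ?thesis unfolding limiting_normal_cone_def
    apply (rule CollectI, rule exI[of _ "\<lambda>k. ybar + tk k *\<^sub>R wk k"], rule exI[of _ ek])
    using c h unfolding regular_normal_cone_def by auto
qed


lemma gd_dir:
  assumes "z \<in> graph_deriv_normal_cone D ybar 0 w" shows "z \<in> dir_normal_cone D ybar w"
proof -
  obtain tk wk zk where h: "tk \<longlonglongrightarrow> 0" "\<forall>k. tk k > 0" "wk \<longlonglongrightarrow> w" "zk \<longlonglongrightarrow> z"
     "\<forall>k. 0 + tk k *\<^sub>R zk k \<in> limiting_normal_cone D (ybar + tk k *\<^sub>R wk k)"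
    using assms unfolding graph_deriv_normal_cone_def by blast
  have "\<forall>k. zk k \<in> limiting_normal_cone D (ybar + tk k *\<^sub>R wk k)"
  proof
    fix k
    have "inverse (tk k) *\<^sub>R (tk k *\<^sub>R zk k) \<in> limiting_normal_cone D (ybar + tk k *\<^sub>R wk k)"
      using lim_cone[of "tk k *\<^sub>R zk k" D _ "inverse (tk k)"] h(2,5) by auto
    then show "zk k \<in> limiting_normal_cone D (ybar + tk k *\<^sub>R wk k)" using h(2)[rule_format, of k] by simp
  qed
  then show ?thesis using dir_lemma[OF h(2,1,3,4)] by blast
qed

lemma sd_dir:
  assumes "q \<in> sub_deriv_normal_cone D ybar 0 (w /\<^sub>R norm w)" "w \<noteq> 0"
  shows "q \<in> dir_normal_cone D ybar w"
proof -
  obtain wk qk tk \<tau>k where h: "wk \<longlonglongrightarrow> w /\<^sub>R norm w" "qk \<longlonglongrightarrow> q" "tk \<longlonglongrightarrow> 0"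
     "\<forall>k. tk k > 0 \<and> \<tau>k k > 0"
     "\<forall>k. 0 + \<tau>k k *\<^sub>R qk k \<in> limiting_normal_cone D (ybar + tk k *\<^sub>R wk k)"
    using assms(1) unfolding sub_deriv_normal_cone_def by blast
  have nw: "norm w > 0" using assms(2) by simp
  have m: "\<forall>k. qk k \<in> limiting_normal_cone D (ybar + (tk k / norm w) *\<^sub>R (norm w *\<^sub>R wk k))"
  proof
    fix k
    have "inverse (\<tau>k k) *\<^sub>R (\<tau>k k *\<^sub>R qk k) \<in> limiting_normal_cone D (ybar + tk k *\<^sub>R wk k)"
      using lim_cone[of "\<tau>k k *\<^sub>R qk k" D _ "inverse (\<tau>k k)"] h(4,5) by auto
    then show "qk k \<in> limiting_normal_cone D (ybar + (tk k / norm w) *\<^sub>R (norm w *\<^sub>R wk k))"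
      using h(4)[rule_format, of k] nw by simp
  qed
  have p: "\<forall>k. tk k / norm w > 0" using h(4) nw by simp
  have t: "(\<lambda>k. tk k / norm w) \<longlonglongrightarrow> 0" using tendsto_divide[OF h(3), of "\<lambda>_. norm w" "norm w"] nw by simp
  have ww: "(\<lambda>k. norm w *\<^sub>R wk k) \<longlonglongrightarrow> w"
    using tendsto_scaleR[OF tendsto_const h(1), of "norm w"] nw by simp
  show ?thesis by (rule dir_lemma[OF p t ww h(2) m])
qed

theorem proposition5p20:
  fixes g :: "'x::euclidean_space \<Rightarrow> 'y::euclidean_space"
    and G1 :: "'x \<Rightarrow> ('x \<Rightarrow>\<^sub>L 'y)"
    and G2 :: "'x \<Rightarrow> ('x \<Rightarrow>\<^sub>L 'x \<Rightarrow>\<^sub>L 'y)"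
    and D :: "'y set" and xbar u :: 'x
  assumes d1: "\<And>x. (g has_derivative blinfun_apply (G1 x)) (at x)"
    and d2: "\<And>x. (G1 has_derivative blinfun_apply (G2 x)) (at x)"
    and c2: "continuous_on UNIV G2"
    and closedD: "closed D"
    and gph: "g xbar \<in> D"
    and unit: "norm u = 1"
    and FOSCMS: "\<And>ys. adjoint (blinfun_apply (G1 xbar)) ys = 0 \<Longrightarrow>
        ys \<in> dir_normal_cone D (g xbar) (G1 xbar u) \<Longrightarrow> ys = 0"
  shows
    "(\<forall>ys zs. adjoint (blinfun_apply (G1 xbar)) ys = 0 \<and>
        hess_apply (G2 xbar) ys u + adjoint (blinfun_apply (G1 xbar)) zs = 0 \<and>
        ys \<in> dir_normal_cone D (g xbar) (G1 xbar u) \<and>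
        zs \<in> graph_deriv_normal_cone D (g xbar) ys (G1 xbar u) \<longrightarrow> ys = 0)
     \<and>
     ((\<forall>ys zh. adjoint (blinfun_apply (G1 xbar)) ys = 0 \<and>
         adjoint (blinfun_apply (G1 xbar)) zh = 0 \<and>
         ys \<in> dir_normal_cone D (g xbar) (G1 xbar u) \<and>
         zh \<in> graph_deriv_normal_cone D (g xbar) ys 0 \<longrightarrow> zh = 0)
      \<or>
      (G1 xbar u \<noteq> 0 \<and>
       (\<forall>ys zh. adjoint (blinfun_apply (G1 xbar)) ys = 0 \<and>
         adjoint (blinfun_apply (G1 xbar)) zh = 0 \<and>
         ys \<in> dir_normal_cone D (g xbar) (G1 xbar u) \<longrightarrow>
         zh \<notin> sub_deriv_normal_cone D (g xbar) ys (G1 xbar u /\<^sub>R norm (G1 xbar u)))))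
     \<and>
     (\<forall>xs ys zs. xs = hess_apply (G2 xbar) ys u + adjoint (blinfun_apply (G1 xbar)) zs \<and>
        ys \<in> dir_normal_cone D (g xbar) (G1 xbar u) \<and>
        adjoint (blinfun_apply (G1 xbar)) ys = 0 \<and>
        zs \<in> graph_deriv_normal_cone D (g xbar) ys (G1 xbar u) \<longrightarrow>
        (\<exists>lam\<in>limiting_normal_cone D (g xbar). xs = adjoint (blinfun_apply (G1 xbar)) lam))"
proof (intro conjI)
  show "\<forall>ys zs. adjoint (blinfun_apply (G1 xbar)) ys = 0 \<and>
        hess_apply (G2 xbar) ys u + adjoint (blinfun_apply (G1 xbar)) zs = 0 \<and>
        ys \<in> dir_normal_cone D (g xbar) (G1 xbar u) \<and>
        zs \<in> graph_deriv_normal_cone D (g xbar) ys (G1 xbar u) \<longrightarrow> ys = 0"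
    using FOSCMS by blast
next
  show "(\<forall>ys zh. adjoint (blinfun_apply (G1 xbar)) ys = 0 \<and>
         adjoint (blinfun_apply (G1 xbar)) zh = 0 \<and>
         ys \<in> dir_normal_cone D (g xbar) (G1 xbar u) \<and>
         zh \<in> graph_deriv_normal_cone D (g xbar) ys 0 \<longrightarrow> zh = 0)
      \<or>
      (G1 xbar u \<noteq> 0 \<and>
       (\<forall>ys zh. adjoint (blinfun_apply (G1 xbar)) ys = 0 \<and>
         adjoint (blinfun_apply (G1 xbar)) zh = 0 \<and>
         ys \<in> dir_normal_cone D (g xbar) (G1 xbar u) \<longrightarrow>
         zh \<notin> sub_deriv_normal_cone D (g xbar) ys (G1 xbar u /\<^sub>R norm (G1 xbar u))))"
  proof (cases "G1 xbar u = 0")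
    case True
    show ?thesis
    proof (rule disjI1, intro allI impI)
      fix ys zh assume a: "adjoint (blinfun_apply (G1 xbar)) ys = 0 \<and>
         adjoint (blinfun_apply (G1 xbar)) zh = 0 \<and>
         ys \<in> dir_normal_cone D (g xbar) (G1 xbar u) \<and>
         zh \<in> graph_deriv_normal_cone D (g xbar) ys 0"
      then have "ys = 0" using FOSCMS by blast
      then have "zh \<in> dir_normal_cone D (g xbar) (G1 xbar u)" using a gd_dir True by metis
      then show "zh = 0" using FOSCMS a by blast
    qed
  next
    case False
    show ?thesis
    proof (rule disjI2, intro conjI False allI impI notI)
      fix ys zh assume a: "adjoint (blinfun_apply (G1 xbar)) ys = 0 \<and>
         adjoint (blinfun_apply (G1 xbar)) zh = 0 \<and>
         ys \<in> dir_normal_cone D (g xbar) (G1 xbar u)"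
        and b: "zh \<in> sub_deriv_normal_cone D (g xbar) ys (G1 xbar u /\<^sub>R norm (G1 xbar u))"
      then have "ys = 0" using FOSCMS by blast
      then have "zh \<in> dir_normal_cone D (g xbar) (G1 xbar u)" using b sd_dir False by metis
      then have "zh = 0" using FOSCMS a by blast
      moreover have "norm zh = 1" using b unfolding sub_deriv_normal_cone_def by blast
      ultimately show False by simp
    qed
  qed
next
  show "\<forall>xs ys zs. xs = hess_apply (G2 xbar) ys u + adjoint (blinfun_apply (G1 xbar)) zs \<and>
        ys \<in> dir_normal_cone D (g xbar) (G1 xbar u) \<and>
        adjoint (blinfun_apply (G1 xbar)) ys = 0 \<and>
        zs \<in> graph_deriv_normal_cone D (g xbar) ys (G1 xbar u) \<longrightarrow>
        (\<exists>lam\<in>limiting_normal_cone D (g xbar). xs = adjoint (blinfun_apply (G1 xbar)) lam)"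
  proof (intro allI impI)
    fix xs ys zs assume a: "xs = hess_apply (G2 xbar) ys u + adjoint (blinfun_apply (G1 xbar)) zs \<and>
        ys \<in> dir_normal_cone D (g xbar) (G1 xbar u) \<and>
        adjoint (blinfun_apply (G1 xbar)) ys = 0 \<and>
        zs \<in> graph_deriv_normal_cone D (g xbar) ys (G1 xbar u)"
    then have y0: "ys = 0" using FOSCMS by blast
    then have "zs \<in> limiting_normal_cone D (g xbar)" using a gd_dir dir_sub_lim by metis
    moreover have "xs = adjoint (blinfun_apply (G1 xbar)) zs" using a y0 by (simp add: hess_apply_def)
    ultimately show "\<exists>lam\<in>limiting_normal_cone D (g xbar). xs = adjoint (blinfun_apply (G1 xbar)) lam" by blast
  qed
qed

end
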